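(* Consider the scalar conservation law $u_t+H(u)_x=0$ and the following fully discrete nonstaggered Lagrangian–Eulerian scheme on a uniform mesh of spacing $h$ with cell averages $U_j^n$. For each $j$, let $U^n_{j-1/2}=\frac12(U^n_{j-1}+U^n_j)+\frac18(U'_j-U'_{j-1})$, where $U'_j$ are slope-limited variations, let $f^n_{j\pm1/2}=H(U^n_{j\pm1/2})/U^n_{j\pm1/2}$ (assuming $U^n_{j\pm1/2}\neq0$), $f^+=\max(f,0)$, $f^-=\max(-f,0)$, and define $$h_j^{n+1}=h+(f^n_{j+1/2}-f^n_{j-1/2})\Delta t,\qquad \overline U_j^{n+1}=\frac{h}{h_j^{n+1}}U_j^n,$$ $$U_j^{n+1}=\frac1h\Big(c_{-1,j}\overline U^{n+1}_{j-1}+c_{0,j}\overline U^{n+1}_j+c_{+1,j}\overline U^{n+1}_{j+1}\Big),$$ with $c_{-1,j}=f^+(U^n_{j-1/2})\Delta t=\max(f^n_{j-1/2},0)\Delta t$, $c_{+1,j}=f^-(U^n_{j+1/2})\Delta t=\max(-f^n_{j+1/2},0)\Delta t$ and $c_{0,j}=h-c_{-1,j}-c_{+1,j}$. Then, taking the limit $\Delta t\to0$, the scheme yields the ODE $$U_t=\frac1h\Big(U_{j-1}f^+_{j-\frac12}-U_jf^-_{j-\frac12}-U_jf^+_{j+\frac12}+U_{j+1}f^-_{j+\frac12}\Big),$$ where $U_j=U_j(t)$, $f^\pm_{j\pm1/2}=f^\pm(U_{j\pm1/2})$ and $U_t=\lim_{\Delta t\to0}\frac{U_j^{n+1}-U_j^n}{\Delta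 t}$; that is, the scheme is compatible with this ODE.
   Context: The quantities $f^n_{j\pm1/2}$ approximate the slopes of the "no-flow curves" bounding the Lagrangian–Eulerian control volumes; $h_j^{n+1}$ is the width of the evolved cell and $\overline U_j^{n+1}$ the conserved average on it, which is then projected back to the original mesh. *)

theory Defs
  imports Complex_Main
begin

text \<open>Cell averages U :: int => real (U j = U_j^n), slope-limited variations Up :: int => real
  (Up j = U'_j), flux H. Index convention: the interface value with index k is U_{k-1/2}.\<close>

definition half_val :: "(int \<Rightarrow> real) \<Rightarrow> (int \<Rightarrow> real) \<Rightarrow> int \<Rightarrow> real" where
  "half_val U Up k = (U (k-1) + U k) / 2 + (Up k - Up (k-1)) / 8"

definition fhalf :: "(real \<Rightarrow> real) \<Rightarrow> (int \<Rightarrow> real) \<Rightarrow> (int \<Rightarrow> real) \<Rightarrow> int \<Rightarrow> real" where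
  "fhalf H U Up k = H (half_val U Up k) / half_val U Up k"

definition fplus :: "real \<Rightarrow> real" where "fplus f = max f 0"
definition fminus :: "real \<Rightarrow> real" where "fminus f = max (- f) 0"

definition hnew :: "real \<Rightarrow> (real \<Rightarrow> real) \<Rightarrow> (int \<Rightarrow> real) \<Rightarrow> (int \<Rightarrow> real) \<Rightarrow> real \<Rightarrow> int \<Rightarrow> real" where
  "hnew h H U Up dt j = h + (fhalf H U Up (j+1) - fhalf H U Up j) * dt"

definition Ubar :: "real \<Rightarrow> (real \<Rightarrow> real) \<Rightarrow> (int \<Rightarrow> real) \<Rightarrow> (int \<Rightarrow> real) \<Rightarrow> real \<Rightarrow> int \<Rightarrow> real" where
  "Ubar h H U Up dt j = h / hnew h H U Up dt j * U j"

definition Unew :: "real \<Rightarrow> (real \<Rightarrow> real) \<Rightarrow> (int \<Rightarrow> real) \<Rightarrow> (int \<Rightarrow> real) \<Rightarrow> real \<Rightarrow> int \<Rightarrow> real" where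
  "Unew h H U Up dt j =
     (let cm = fplus (fhalf H U Up j) * dt;
          cp = fminus (fhalf H U Up (j+1)) * dt;
          c0 = h - cm - cp
      in (1/h) * (cm * Ubar h H U Up dt (j-1) + c0 * Ubar h H U Up dt j + cp * Ubar h H U Up dt (j+1)))"

end

theory Submission
  imports Defs
begin

theorem proposition2:
  fixes h :: real and H :: "real \<Rightarrow> real" and U Up :: "int \<Rightarrow> real" and j :: int
  assumes "h > 0"
    and "\<And>k. half_val U Up k \<noteq> 0"
  shows "((\<lambda>dt. (Unew h H U Up dt j - U j) / dt) \<longlongrightarrow>
           (1/h) * (U (j-1) * fplus (fhalf H U Up j) - U j * fminus (fhalf H U Up j)
                    - U j * fplus (fhalf H U Up (j+1)) + U (j+1) * fminus (fhalf H U Up (j+1))))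
         (at 0)"
proof -
  define F where "F k = fhalf H U Up k" for k
  define B where "B dt k = h / (h + (F (k+1) - F k) * dt) * U k" for dt k
  define ap where "ap = fplus (F j)"
  define bm where "bm = fminus (F (j+1))"
  define g where "g dt = (1/h) * (ap * B dt (j-1) + bm * B dt (j+1) - (ap+bm) * B dt j)
      - U j * (F (j+1) - F j) / (h + (F (j+1) - F j) * dt)" for dt
  have eq: "(Unew h H U Up dt j - U j) / dt = g dt" if "dt \<noteq> 0" "h + (F (j+1) - F j) * dt \<noteq> 0" for dt
  proof -
    have "B dt j - U j = - U j * (F (j+1) - F j) * dt / (h + (F (j+1) - F j) * dt)"
      using that by (simp add: B_def field_simps)
    moreover have "Unew h H U Up dt j = (1/h) * (ap*dt * B dt (j-1) + (h - ap*dt - bm*dt) * B dt j + bm*dt * B dt (j+1))"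
      by (simp add: Unew_def Let_def Ubar_def hnew_def B_def F_def ap_def bm_def)
    ultimately have "Unew h H U Up dt j - U j = dt * ((1/h) * (ap * B dt (j-1) + bm * B dt (j+1) - (ap+bm) * B dt j))
       + dt * (- U j * (F (j+1) - F j) / (h + (F (j+1) - F j) * dt))"
      using \<open>h>0\<close> by (simp add: algebra_simps diff_divide_distrib add_divide_distrib)
    then show ?thesis using that unfolding g_def by (simp add: field_simps)
  qed
  have ev: "\<forall>\<^sub>F dt in at 0. (Unew h H U Up dt j - U j) / dt = g dt"
  proof -
    have "((\<lambda>dt::real. h + (F (j+1) - F j) * dt) \<longlongrightarrow> h + (F (j+1) - F j) * 0) (at 0)"
      by (intro tendsto_intros)
    hence "\<forall>\<^sub>F dt in at (0::real). h + (F (j+1) - F j) * dt \<noteq> 0"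
      using \<open>h>0\<close> by (intro tendsto_imp_eventually_ne) auto
    moreover have "\<forall>\<^sub>F dt in at (0::real). dt \<noteq> 0" by (simp add: eventually_at_filter)
    ultimately show ?thesis by eventually_elim (use eq in auto)
  qed
  have lim: "(g \<longlongrightarrow> g 0) (at 0)"
    unfolding g_def B_def using \<open>h>0\<close> by (intro tendsto_intros) auto
  have g0: "g 0 = (1/h) * (U (j-1) * fplus (F j) - U j * fminus (F j)
                    - U j * fplus (F (j+1)) + U (j+1) * fminus (F (j+1)))"
    using \<open>h>0\<close> unfolding g_def B_def ap_def bm_def fplus_def fminus_def
    by (simp add: field_simps max_def)
  show ?thesis using tendsto_cong[OF ev] lim g0 unfolding F_def by simp
qed

end
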